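(* Let $v$ be a typical weight and let $X$ be an initial space such that for every $f\in X$ and $0\le r<1$ the function $f_r(z)=f(rz)$ belongs to $X$, and $\sup_{0\le r<1}\|f_r\|_X\le C\|f\|_X$ for a constant $C$ independent of $f$. Let $T$ be an intrinsic operator on $\mathcal{H}(\mathbb{D})$ such that $Tf_r\in\mathcal{B}_{v,0}$ for all $f\in X$ and all $0\le r<1$. If $T:X\to\mathcal{B}_v$ is weakly compact, then $T:X\to\mathcal{B}_{v,0}$ is bounded.
   Context: $\mathcal{H}(\mathbb{D})$ is the space of holomorphic functions on the unit disk $\mathbb{D}$ with the topology $\tau_{uc}$ of uniform convergence on compact subsets. A linear operator $T$ on $\mathcal{H}(\mathbb{D})$ is intrinsic if it maps $\tau_{uc}$-convergent sequences to $\tau_{uc}$-convergent sequences. An initial space is a Banach space $X\subset\mathcal{H}(\mathbb{D})$ containing the polynomials such that every sequence in the closed unit ball of $X$ has a subsequence converging in $\tau_{uc}$ to some function in $X$. A typical weight is a continuous radial $v:\mathbb{D}\to(0,1]$, non-increasing in $|z|$, with $v(z)\to0$ as $|z|\to1$. $\mathcal{B}_v=\{f\in\mathcal{H}(\mathbb{D}):\sup_z v(z)|f'(z)|<\infty\}$ with norm $|f(0)|+\sup_z v(z)|f'(z)|$, and $\mathcal{B}_{v,0}=\{f:\lim_{|z|\to1}v(z)|f'(z)|=0\}$. *)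

theory Defs
  imports "HOL-Complex_Analysis.Complex_Analysis" "HOL-Computational_Algebra.Polynomial"
begin

type_synonym hfun = "complex \<Rightarrow> complex"

text \<open>H(D): functions holomorphic on the unit disc (values outside the disc are irrelevant).\<close>
definition HD :: "hfun set" where
  "HD = {f. f holomorphic_on ball 0 1}"

definition uc_conv :: "(nat \<Rightarrow> hfun) \<Rightarrow> hfun \<Rightarrow> bool" where
  "uc_conv F g \<longleftrightarrow> (\<forall>K. compact K \<and> K \<subseteq> ball 0 1 \<longrightarrow> uniform_limit K F g sequentially)"

definition intrinsic :: "(hfun \<Rightarrow> hfun) \<Rightarrow> bool" where
  "intrinsic T \<longleftrightarrow>
     T ` HD \<subseteq> HD \<and>
     (\<forall>f\<in>HD. \<forall>g\<in>HD. \<forall>a b::complex. \<forall>z\<in>ball 0 1.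
        T (\<lambda>w. a * f w + b * g w) z = a * T f z + b * T g z) \<and>
     (\<forall>F g. (\<forall>n. F n \<in> HD) \<and> g \<in> HD \<and> uc_conv F g \<longrightarrow>
        (\<exists>h\<in>HD. uc_conv (\<lambda>n. T (F n)) h))"

definition banach_fun_space :: "hfun set \<Rightarrow> (hfun \<Rightarrow> real) \<Rightarrow> bool" where
  "banach_fun_space X N \<longleftrightarrow>
     X \<subseteq> HD \<and>
     (\<forall>f\<in>X. \<forall>g\<in>X. \<forall>a b::complex. (\<lambda>z. a * f z + b * g z) \<in> X) \<and>
     (\<forall>f\<in>X. 0 \<le> N f) \<and>
     (\<forall>f\<in>X. N f = 0 \<longrightarrow> (\<forall>z\<in>ball 0 1. f z = 0)) \<and>
     (\<forall>f\<in>X. \<forall>a::complex. N (\<lambda>z. a * f z) = cmod a * N f) \<and>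
     (\<forall>f\<in>X. \<forall>g\<in>X. N (\<lambda>z. f z + g z) \<le> N f + N g) \<and>
     (\<forall>F. (\<forall>n. F n \<in> X) \<and> (\<forall>e>0. \<exists>M. \<forall>m\<ge>M. \<forall>n\<ge>M. N (\<lambda>z. F m z - F n z) < e) \<longrightarrow>
        (\<exists>g\<in>X. (\<lambda>n. N (\<lambda>z. F n z - g z)) \<longlonglongrightarrow> 0))"

definition initial_space :: "hfun set \<Rightarrow> (hfun \<Rightarrow> real) \<Rightarrow> bool" where
  "initial_space X N \<longleftrightarrow>
     banach_fun_space X N \<and>
     (\<forall>p::complex poly. (\<lambda>z. poly p z) \<in> X) \<and>
     (\<forall>F. (\<forall>n. F n \<in> X \<and> N (F n) \<le> 1) \<longrightarrow>
        (\<exists>(\<sigma>::nat \<Rightarrow> nat) g. strict_mono \<sigma> \<and> g \<in> X \<and> uc_conv (F \<circ> \<sigma>) g))"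

definition typical_weight :: "(complex \<Rightarrow> real) \<Rightarrow> bool" where
  "typical_weight v \<longleftrightarrow>
     continuous_on (ball 0 1) v \<and>
     (\<forall>z\<in>ball 0 1. 0 < v z \<and> v z \<le> 1) \<and>
     (\<forall>z\<in>ball 0 1. \<forall>w\<in>ball 0 1. norm z = norm w \<longrightarrow> v z = v w) \<and>
     (\<forall>z\<in>ball 0 1. \<forall>w\<in>ball 0 1. norm z \<le> norm w \<longrightarrow> v w \<le> v z) \<and>
     (\<forall>e>0. \<exists>\<delta><1. \<forall>z. \<delta> < norm z \<and> norm z < 1 \<longrightarrow> v z < e)"

definition Bv :: "(complex \<Rightarrow> real) \<Rightarrow> hfun set" where
  "Bv v = {f\<in>HD. \<exists>M. \<forall>z\<in>ball 0 1. v z * cmod (deriv f z) \<le> M}"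

definition Bv_norm :: "(complex \<Rightarrow> real) \<Rightarrow> hfun \<Rightarrow> real" where
  "Bv_norm v f = cmod (f 0) + (SUP z\<in>ball 0 1. v z * cmod (deriv f z))"

definition Bv0 :: "(complex \<Rightarrow> real) \<Rightarrow> hfun set" where
  "Bv0 v = {f\<in>HD. \<forall>e>0. \<exists>\<delta><1. \<forall>z. \<delta> < norm z \<and> norm z < 1 \<longrightarrow> v z * cmod (deriv f z) < e}"

definition Bv_dual :: "(complex \<Rightarrow> real) \<Rightarrow> (hfun \<Rightarrow> complex) set" where
  "Bv_dual v = {\<phi>.
     (\<forall>f\<in>Bv v. \<forall>g\<in>Bv v. \<forall>a b::complex. \<phi> (\<lambda>z. a * f z + b * g z) = a * \<phi> f + b * \<phi> g) \<and>
     (\<exists>C. \<forall>f\<in>Bv v. cmod (\<phi> f) \<le> C * Bv_norm v f)}"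

definition weak_top :: "(complex \<Rightarrow> real) \<Rightarrow> hfun topology" where
  "weak_top v = pullback_topology (Bv v) (\<lambda>f. restrict (\<lambda>\<phi>. \<phi> f) (Bv_dual v))
                  (product_topology (\<lambda>_. euclidean) (Bv_dual v))"

definition weakly_compact_op :: "(hfun \<Rightarrow> hfun) \<Rightarrow> hfun set \<Rightarrow> (hfun \<Rightarrow> real) \<Rightarrow> (complex \<Rightarrow> real) \<Rightarrow> bool" where
  "weakly_compact_op T X N v \<longleftrightarrow>
     T ` X \<subseteq> Bv v \<and>
     compactin (weak_top v) ((weak_top v) closure_of (T ` {f\<in>X. N f \<le> 1}))"

end

theory Submission
  imports Defs
begin


definition ultra :: "'a filter \<Rightarrow> bool" where
  "ultra U \<longleftrightarrow> U \<noteq> bot \<and> (\<forall>P. eventually P U \<or> eventually (\<lambda>x. \<not> P x) U)"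

lemma maximal_is_ultra:
  assumes "F \<noteq> bot" and max: "\<And>G. G \<noteq> bot \<Longrightarrow> G \<le> F \<Longrightarrow> F = G"
  shows "ultra F"
  unfolding ultra_def
proof (intro conjI allI assms(1) disjCI)
  fix P assume "\<not> (\<forall>\<^sub>F x in F. \<not> P x)"
  then have "inf F (principal {x. P x}) \<noteq> bot"
    by (simp add: trivial_limit_def eventually_inf_principal not_eventually)
  then have F: "F = inf F (principal {x. P x})" by (rule max) simp
  show "eventually P F" by (subst F) (simp add: eventually_inf_principal)
qed

lemma exists_ultra_below:
  fixes F :: "'a filter" assumes F: "F \<noteq> bot"
  shows "\<exists>U\<le>F. ultra U"
proof -
  let ?R = "{(b, a). a \<noteq> bot \<and> a \<le> b \<and> b \<le> F}"
  have nb: "c \<in> Chains ?R \<Longrightarrow> bot \<notin> c" for c by (auto simp: Chains_def)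
  have fld[simp]: "Field ?R = {G. G \<noteq> bot \<and> G \<le> F}"
    by (auto simp: Field_def bot_unique)
  have "\<exists>m\<in>Field ?R. \<forall>a\<in>Field ?R. (m, a) \<in> ?R \<longrightarrow> a = m"
  proof (rule Zorns_po_lemma)
    show "Partial_order ?R"
      by (auto simp: partial_order_on_def preorder_on_def
          antisym_def refl_on_def trans_def Field_def bot_unique)
    show "\<exists>u\<in>Field ?R. \<forall>a\<in>C. (a, u) \<in> ?R" if C: "C \<in> Chains ?R" for C
    proof (simp, intro exI conjI ballI)
      have IC: "Inf C \<noteq> bot" "Inf C \<le> F" if "C \<noteq> {}"
      proof -
        from C that have "Inf C = bot \<longleftrightarrow> (\<exists>x\<in>C. x = bot)"
          unfolding trivial_limit_def by (intro eventually_Inf_base) (auto simp: Chains_def)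
        with C show "Inf C \<noteq> bot" by (simp add: nb)
        from that obtain x where "x \<in> C" by auto
        with C show "Inf C \<le> F" by (auto intro!: Inf_lower2[of x] simp: Chains_def)
      qed
      then have [simp]: "inf F (Inf C) = (if C = {} then F else Inf C)"
        using C by (auto simp add: inf_absorb2)
      from C show "inf F (Inf C) \<noteq> bot" by (simp add: F IC)
      from C show "inf F (Inf C) \<le> F" by (simp add: Chains_def IC F)
      with C show "inf F (Inf C) \<le> x" "x \<le> F" if "x \<in> C" for x
        using that by (auto intro: Inf_lower simp: Chains_def)
    qed
  qed
  then obtain U where U: "U \<in> Field ?R" "\<forall>a\<in>Field ?R. (U, a) \<in> ?R \<longrightarrow> a = U" ..
  have "ultra U"
  proof (rule maximal_is_ultra)
    show "U \<noteq> bot" using U(1) by simp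
    fix G :: "'a filter" assume "G \<noteq> bot" "G \<le> U"
    moreover have "U \<le> F" using U(1) by simp
    ultimately have "G \<in> Field ?R" "(U, G) \<in> ?R" using order_trans by auto
    then show "U = G" using U(2) by blast
  qed
  then show ?thesis using U(1) by auto
qed

lemma ultra_seq: "\<exists>U::nat filter. U \<le> sequentially \<and> ultra U"
  using exists_ultra_below[of "sequentially :: nat filter"] by simp

lemma ultra_lim:
  fixes x :: "'b \<Rightarrow> complex"
  assumes U: "ultra U" and B: "\<forall>k. cmod (x k) \<le> B"
  shows "(x \<longlongrightarrow> Lim U x) U"
proof -
  have nb: "U \<noteq> bot" using U by (simp add: ultra_def)
  have "compact (cball (0::complex) B)" by simp
  moreover have "eventually (\<lambda>k. x k \<in> cball 0 B) U" using B by simp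
  moreover have "filtermap x U \<noteq> bot" using nb by (simp add: filtermap_bot_iff)
  ultimately obtain l where "l \<in> cball 0 B" "inf (nhds l) (filtermap x U) \<noteq> bot"
    unfolding compact_filter by (auto simp: eventually_filtermap)
  have "(x \<longlongrightarrow> l) U"
  proof (rule topological_tendstoI)
    fix S assume S: "open S" "l \<in> S"
    show "eventually (\<lambda>k. x k \<in> S) U"
    proof (rule ccontr)
      assume "\<not> ?thesis"
      then have ev: "eventually (\<lambda>k. x k \<notin> S) U" using U unfolding ultra_def by blast
      have "eventually (\<lambda>y. y \<in> S) (nhds l)" using S eventually_nhds by blast
      moreover have "eventually (\<lambda>y. y \<notin> S) (filtermap x U)" using ev by (simp add: eventually_filtermap)
      ultimately have "eventually (\<lambda>y. False) (inf (nhds l) (filtermap x U))"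
        using eventually_inf by fastforce
      then show False using \<open>inf (nhds l) (filtermap x U) \<noteq> bot\<close> by (simp add: trivial_limit_def)
    qed
  qed
  then show ?thesis using tendsto_Lim nb by metis
qed



lemma bv_bdd:
  assumes "g \<in> Bv v"
  shows "bdd_above ((\<lambda>z. v z * cmod (deriv g z)) ` ball 0 1)"
  using assms unfolding Bv_def by (auto intro: bdd_aboveI2)

lemma bv_pt:
  assumes "g \<in> Bv v" "z \<in> ball 0 1"
  shows "v z * cmod (deriv g z) \<le> Bv_norm v g"
proof -
  have "v z * cmod (deriv g z) \<le> (SUP z\<in>ball 0 1. v z * cmod (deriv g z))"
    using cSUP_upper[OF assms(2) bv_bdd[OF assms(1)]] .
  then show ?thesis unfolding Bv_norm_def by (smt (verit) norm_ge_zero)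
qed

lemma tw_pos: "typical_weight v \<Longrightarrow> z \<in> ball 0 1 \<Longrightarrow> 0 < v z"
  unfolding typical_weight_def by blast

lemma bv_0:
  assumes "typical_weight v" "g \<in> Bv v"
  shows "cmod (g 0) \<le> Bv_norm v g"
proof -
  have z: "(0::complex) \<in> ball 0 1" by simp
  have "v 0 * cmod (deriv g 0) \<le> (SUP z\<in>ball 0 1. v z * cmod (deriv g z))"
    using cSUP_upper[OF z bv_bdd[OF assms(2)]] .
  moreover have "0 \<le> v 0 * cmod (deriv g 0)" using tw_pos[OF assms(1) z] by simp
  ultimately show ?thesis unfolding Bv_norm_def by linarith
qed

lemma deriv_lin:
  assumes "f holomorphic_on ball 0 1" "g holomorphic_on ball 0 1" "z \<in> ball 0 1"
  shows "deriv (\<lambda>w. a * f w + b * g w) z = a * deriv f z + b * deriv g z"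
proof -
  have "f field_differentiable at z" "g field_differentiable at z"
    using assms holomorphic_on_imp_differentiable_at by blast+
  then have "(f has_field_derivative deriv f z) (at z)" "(g has_field_derivative deriv g z) (at z)"
    using field_differentiable_derivI by blast+
  then have "((\<lambda>w. a * f w + b * g w) has_field_derivative (a * deriv f z + b * deriv g z)) (at z)"
    by (auto intro!: derivative_eq_intros)
  then show ?thesis by (rule DERIV_imp_deriv)
qed

lemma Bv_HD: "g \<in> Bv v \<Longrightarrow> g holomorphic_on ball 0 1"
  unfolding Bv_def HD_def by auto

lemma dual_deriv:
  assumes "typical_weight v" "z \<in> ball 0 1"
  shows "(\<lambda>g. v z * deriv g z) \<in> Bv_dual v"
  unfolding Bv_dual_def
proof (intro CollectI conjI ballI allI exI)
  fix f g a b assume "f \<in> Bv v" "g \<in> Bv v"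
  then show "v z * deriv (\<lambda>w. a * f w + b * g w) z = a * (v z * deriv f z) + b * (v z * deriv g z)"
    using deriv_lin[OF Bv_HD Bv_HD assms(2)] by (simp add: algebra_simps)
next
  fix f assume "f \<in> Bv v"
  then show "cmod (v z * deriv f z) \<le> 1 * Bv_norm v f"
    using bv_pt[OF _ assms(2)] tw_pos[OF assms] by (simp add: norm_mult)
qed

lemma dual_ev0:
  assumes "typical_weight v"
  shows "(\<lambda>g. g 0) \<in> Bv_dual v"
  unfolding Bv_dual_def using bv_0[OF assms] by (auto intro!: exI[of _ 1])

lemma topspace_weak: "topspace (weak_top v) = Bv v"
  unfolding weak_top_def topspace_pullback_topology topspace_product_topology by auto

lemma dual_cont:
  assumes "\<phi> \<in> Bv_dual v"
  shows "continuous_map (weak_top v) euclidean \<phi>"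
proof -
  have "continuous_map (product_topology (\<lambda>_. euclidean) (Bv_dual v)) euclidean (\<lambda>x. x \<phi>)"
    using continuous_map_product_projection[OF assms] .
  then have "continuous_map (weak_top v) euclidean ((\<lambda>x. x \<phi>) \<circ> (\<lambda>f. restrict (\<lambda>\<phi>. \<phi> f) (Bv_dual v)))"
    unfolding weak_top_def by (rule continuous_map_pullback)
  then show ?thesis
    by (rule continuous_map_eq) (use assms in auto)
qed

lemma dual_lim:
  assumes tw: "typical_weight v" and U: "ultra U" and zs: "\<forall>k. zs k \<in> ball 0 1 \<and> cmod (w k) \<le> 1"
  shows "(\<lambda>g. Lim U (\<lambda>k. w k * (v (zs k) * deriv g (zs k)))) \<in> Bv_dual v"
proof -
  have nb: "U \<noteq> bot" using U by (simp add: ultra_def)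
  have bd: "cmod (w k * (v (zs k) * deriv g (zs k))) \<le> Bv_norm v g" if "g \<in> Bv v" for g k
  proof -
    have "cmod (w k * (v (zs k) * deriv g (zs k))) = cmod (w k) * (v (zs k) * cmod (deriv g (zs k)))"
      using tw_pos[OF tw, of "zs k"] zs by (simp add: norm_mult)
    also have "\<dots> \<le> 1 * (v (zs k) * cmod (deriv g (zs k)))"
      using zs tw_pos[OF tw, of "zs k"] by (intro mult_right_mono) auto
    also have "\<dots> \<le> Bv_norm v g" using bv_pt[OF that, of "zs k"] zs by simp
    finally show ?thesis .
  qed
  have L: "((\<lambda>k. w k * (v (zs k) * deriv g (zs k))) \<longlongrightarrow> Lim U (\<lambda>k. w k * (v (zs k) * deriv g (zs k)))) U"
    if "g \<in> Bv v" for g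
    by (rule ultra_lim[OF U]) (use bd[OF that] in blast)
  show ?thesis
    unfolding Bv_dual_def
  proof (intro CollectI conjI ballI allI exI)
    fix f g a b assume f: "f \<in> Bv v" and g: "g \<in> Bv v"
    have eq: "(\<lambda>k. w k * (v (zs k) * deriv (\<lambda>z. a * f z + b * g z) (zs k))) =
       (\<lambda>k. a * (w k * (v (zs k) * deriv f (zs k))) + b * (w k * (v (zs k) * deriv g (zs k))))"
      using deriv_lin[OF Bv_HD[OF f] Bv_HD[OF g]] zs by (auto simp: algebra_simps)
    show "Lim U (\<lambda>k. w k * (v (zs k) * deriv (\<lambda>z. a * f z + b * g z) (zs k))) =
        a * Lim U (\<lambda>k. w k * (v (zs k) * deriv f (zs k))) + b * Lim U (\<lambda>k. w k * (v (zs k) * deriv g (zs k)))"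
      unfolding eq by (intro tendsto_Lim nb tendsto_add tendsto_mult_left L f g)
  next
    fix f assume f: "f \<in> Bv v"
    have "cmod (Lim U (\<lambda>k. w k * (v (zs k) * deriv f (zs k)))) \<le> Bv_norm v f"
      using tendsto_upperbound[OF tendsto_norm[OF L[OF f]] _ nb] bd[OF f] by simp
    then show "cmod (Lim U (\<lambda>k. w k * (v (zs k) * deriv f (zs k)))) \<le> 1 * Bv_norm v f" by simp
  qed
qed

lemma dual_series:
  assumes tw: "typical_weight v" and zs: "\<forall>k. zs k \<in> ball 0 1 \<and> cmod (w k) \<le> c k" and c: "summable c"
  shows "(\<lambda>g. \<Sum>k. w k * (v (zs k) * deriv g (zs k))) \<in> Bv_dual v"
proof -
  have bd: "cmod (w k * (v (zs k) * deriv g (zs k))) \<le> c k * Bv_norm v g" if "g \<in> Bv v" for g k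
  proof -
    have "cmod (w k * (v (zs k) * deriv g (zs k))) = cmod (w k) * (v (zs k) * cmod (deriv g (zs k)))"
      using tw_pos[OF tw, of "zs k"] zs by (simp add: norm_mult)
    also have "\<dots> \<le> c k * Bv_norm v g"
    proof -
      have "0 \<le> c k" using zs[rule_format, of k] by (smt (verit) norm_ge_zero)
      then show ?thesis using zs tw_pos[OF tw, of "zs k"] bv_pt[OF that, of "zs k"]
        by (intro mult_mono) auto
    qed
    finally show ?thesis .
  qed
  have sn: "summable (\<lambda>k. cmod (w k * (v (zs k) * deriv g (zs k))))" if "g \<in> Bv v" for g
    by (rule summable_comparison_test[of _ "\<lambda>k. c k * Bv_norm v g"]) (use bd[OF that] summable_mult2[OF c] in auto)
  have s: "summable (\<lambda>k. w k * (v (zs k) * deriv g (zs k)))" if "g \<in> Bv v" for g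
    using summable_norm_cancel[OF sn[OF that]] .
  show ?thesis
    unfolding Bv_dual_def
  proof (intro CollectI conjI ballI allI exI)
    fix f g a b assume f: "f \<in> Bv v" and g: "g \<in> Bv v"
    have eq: "(\<lambda>k. w k * (v (zs k) * deriv (\<lambda>z. a * f z + b * g z) (zs k))) =
       (\<lambda>k. a * (w k * (v (zs k) * deriv f (zs k))) + b * (w k * (v (zs k) * deriv g (zs k))))"
      using deriv_lin[OF Bv_HD[OF f] Bv_HD[OF g]] zs by (auto simp: algebra_simps)
    show "(\<Sum>k. w k * (v (zs k) * deriv (\<lambda>z. a * f z + b * g z) (zs k))) =
        a * (\<Sum>k. w k * (v (zs k) * deriv f (zs k))) + b * (\<Sum>k. w k * (v (zs k) * deriv g (zs k)))"
      unfolding eq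
      by (rule sums_unique[symmetric], rule sums_add; rule sums_mult; rule summable_sums; rule s) (fact f, fact g)
  next
    fix f assume f: "f \<in> Bv v"
    have "cmod (\<Sum>k. w k * (v (zs k) * deriv f (zs k))) \<le> (\<Sum>k. cmod (w k * (v (zs k) * deriv f (zs k))))"
      by (rule summable_norm[OF sn[OF f]])
    also have "\<dots> \<le> (\<Sum>k. c k * Bv_norm v f)"
      by (rule suminf_le) (use bd[OF f] sn[OF f] summable_mult2[OF c] in auto)
    also have "\<dots> = suminf c * Bv_norm v f" by (simp add: suminf_mult2[OF c])
    finally show "cmod (\<Sum>k. w k * (v (zs k) * deriv f (zs k))) \<le> suminf c * Bv_norm v f" .
  qed
qed



lemma weak_cluster:
  assumes K: "compactin (weak_top v) ((weak_top v) closure_of S)"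
    and S: "S \<subseteq> Bv v" and g: "\<forall>n. g n \<in> S"
  shows "\<exists>p \<in> Bv v. \<forall>\<phi>\<in>Bv_dual v. \<forall>L. (\<lambda>n. \<phi> (g n)) \<longlonglongrightarrow> L \<longrightarrow> \<phi> p = L"
proof -
  define W where "W = weak_top v"
  define A where "A n = W closure_of (g ` {n..})" for n
  have top: "topspace W = Bv v" unfolding W_def by (rule topspace_weak)
  have gin: "g m \<in> A n" if "n \<le> m" for n m
  proof -
    have "g ` {n..} \<subseteq> topspace W" using g S top by blast
    then have "g ` {n..} \<subseteq> A n" unfolding A_def by (rule closure_of_subset)
    then show ?thesis using that by blast
  qed
  have gK: "g m \<in> W closure_of S" for m
  proof -
    have "S \<subseteq> W closure_of S" by (rule closure_of_subset) (simp add: top S)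
    then show ?thesis using g by blast
  qed
  have "(W closure_of S) \<inter> \<Inter>(range A) \<noteq> {}"
  proof -
    have fip: "(W closure_of S) \<inter> \<Inter>F \<noteq> {}" if fF: "finite F" "F \<subseteq> range A" for F
    proof -
      obtain I where I: "finite I" "F = A ` I" using finite_subset_image[OF fF] by metis
      define m where "m = (if I = {} then 0 else Max I)"
      have "g m \<in> A i" if "i \<in> I" for i
      proof -
        have "i \<le> m" using that I(1) by (auto simp: m_def)
        then show ?thesis by (rule gin)
      qed
      then have "g m \<in> \<Inter>F" using I(2) by blast
      then show ?thesis using gK by blast
    qed
    have cl: "\<forall>C\<in>range A. closedin W C" unfolding A_def by simp
    have fip': "\<forall>F. finite F \<and> F \<subseteq> range A \<longrightarrow> (W closure_of S) \<inter> \<Inter>F \<noteq> {}"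
      using fip by blast
    have KK: "\<forall>U. (\<forall>C\<in>U. closedin W C) \<and> (\<forall>F. finite F \<and> F \<subseteq> U \<longrightarrow> (W closure_of S) \<inter> \<Inter>F \<noteq> {})
       \<longrightarrow> (W closure_of S) \<inter> \<Inter>U \<noteq> {}"
      using K[folded W_def, unfolded compactin_fip] by (rule conjunct2)
    show ?thesis using KK[THEN spec, of "range A"] cl fip' by (rule mp[OF _ conjI])
  qed
  then obtain p where p0: "p \<in> (W closure_of S) \<inter> \<Inter>(range A)" by (meson ex_in_conv)
  then have p: "p \<in> W closure_of S" "\<And>n. p \<in> A n" by auto
  have "W closure_of S \<subseteq> topspace W" by (rule closure_of_subset_topspace)
  then have pB: "p \<in> Bv v" using p(1) top by blast
  have "\<phi> p = L" if \<phi>: "\<phi> \<in> Bv_dual v" and L: "(\<lambda>n. \<phi> (g n)) \<longlonglongrightarrow> L" for \<phi> L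
  proof -
    have c: "continuous_map W euclidean \<phi>" unfolding W_def by (rule dual_cont[OF \<phi>])
    have "dist (\<phi> p) L \<le> e" if e: "e > 0" for e
    proof -
      obtain n0 where n0: "\<And>m. m \<ge> n0 \<Longrightarrow> dist (\<phi> (g m)) L < e"
        using L e unfolding lim_sequentially by blast
      have "\<phi> p \<in> \<phi> ` A n0" using p(2) by (rule imageI)
      also have "\<dots> \<subseteq> euclidean closure_of (\<phi> ` g ` {n0..})"
        unfolding A_def using continuous_map_image_closure_subset[OF c] by blast
      also have "\<dots> \<subseteq> cball L e"
        unfolding euclidean_closure_of
        by (rule closure_minimal) (use n0 in \<open>auto simp: dist_commute less_imp_le\<close>)
      finally show ?thesis by (simp add: dist_commute)
    qed
    note dle = this
    show ?thesis
    proof (rule ccontr)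
      assume "\<phi> p \<noteq> L"
      then have "dist (\<phi> p) L > 0" by simp
      from dle[OF half_gt_zero[OF this]] this show False by simp
    qed
  qed
  then show ?thesis using pB by blast
qed



lemma unit_phase:
  fixes e :: complex
  shows "cmod (if e = 0 then 1 else cnj e / of_real (cmod e)) \<le> 1"
    and "(if e = 0 then 1 else cnj e / of_real (cmod e)) * e = of_real (cmod e)"
proof -
  show "cmod (if e = 0 then 1 else cnj e / of_real (cmod e)) \<le> 1"
    by (simp add: norm_divide)
  show "(if e = 0 then 1 else cnj e / of_real (cmod e)) * e = of_real (cmod e)"
  proof (cases "e = 0")
    case False
    have "cnj e * e = of_real ((cmod e)^2)" by (metis complex_norm_square mult.commute of_real_power)
    then show ?thesis using False by (simp add: power2_eq_square field_simps)
  qed simp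
qed

lemma hump:
  fixes E :: "'z \<Rightarrow> 'g \<Rightarrow> complex"
  assumes Q: "\<forall>g\<in>S. \<exists>q. \<forall>z\<in>Z. cmod (E z g) \<le> q"
    and H: "\<And>c u zs. (\<And>k. 0 \<le> c k) \<Longrightarrow> (\<And>k. cmod (u k) \<le> 1) \<Longrightarrow> (\<And>k. zs k \<in> Z) \<Longrightarrow> summable c
        \<Longrightarrow> \<exists>R. \<forall>g\<in>S. cmod (\<Sum>k. of_real (c k) * u k * E (zs k) g) \<le> R"
  shows "\<exists>R. \<forall>g\<in>S. \<forall>z\<in>Z. cmod (E z g) \<le> R"
proof (rule ccontr)
  assume na: "\<not> ?thesis"
  have "\<forall>R. \<exists>gz. fst gz \<in> S \<and> snd gz \<in> Z \<and> R < cmod (E (snd gz) (fst gz))"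
  proof
    fix R show "\<exists>gz. fst gz \<in> S \<and> snd gz \<in> Z \<and> R < cmod (E (snd gz) (fst gz))"
      using na by (metis fst_conv snd_conv not_le)
  qed
  then obtain GZ where GZ: "\<And>R. fst (GZ R) \<in> S \<and> snd (GZ R) \<in> Z \<and> R < cmod (E (snd (GZ R)) (fst (GZ R)))"
    by metis
  define G where "G R = fst (GZ R)" for R
  define Zp where "Zp R = snd (GZ R)" for R
  have G: "G R \<in> S" "Zp R \<in> Z" "R < cmod (E (Zp R) (G R))" for R
    using GZ[of R] unfolding G_def Zp_def by auto
  obtain QQ where QQ: "\<And>g z. g \<in> S \<Longrightarrow> z \<in> Z \<Longrightarrow> cmod (E z g) \<le> QQ g"
    using bchoice[OF Q] by metis
  have "\<forall>z\<in>Z. \<exists>m. \<forall>g\<in>S. cmod (E z g) \<le> m"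
  proof
    fix z assume z: "z \<in> Z"
    have s1: "summable (\<lambda>k::nat. if k = 0 then (1::real) else 0)"
      using sums_single[of 0 "\<lambda>_. (1::real)"] by (rule sums_summable)
    have "\<exists>R. \<forall>g\<in>S. cmod (\<Sum>k. of_real (if k = 0 then 1 else 0) * 1 * E ((\<lambda>_. z) k) g) \<le> R"
      by (rule H[OF _ _ _ s1]) (simp_all add: z)
    then obtain R where R: "\<forall>g\<in>S. cmod (\<Sum>k. of_real (if k = 0 then 1 else 0) * 1 * E ((\<lambda>_. z) k) g) \<le> R"
      by blast
    have "(\<Sum>k. of_real (if k = 0 then 1 else 0) * 1 * E ((\<lambda>_. z) k) g) = E z g" for g
      by (subst suminf_finite[of "{0}"]) auto
    then show "\<exists>m. \<forall>g\<in>S. cmod (E z g) \<le> m" using R by auto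
  qed
  then obtain MM where MM: "\<And>z g. z \<in> Z \<Longrightarrow> g \<in> S \<Longrightarrow> cmod (E z g) \<le> MM z"
    using bchoice by metis
  define M where "M z = max 0 (MM z)" for z
  have M: "z \<in> Z \<Longrightarrow> g \<in> S \<Longrightarrow> cmod (E z g) \<le> M z" "0 \<le> M z" for z g
    using MM[of z g] unfolding M_def by auto
  define st where "st = rec_nat (0::real, 1::real) (\<lambda>n s. (fst s + (1 / (2^n * snd s)) * M (Zp ((real n + fst s + 3) / (1 / (2^n * snd s)))),
      snd s + \<bar>QQ (G ((real n + fst s + 3) / (1 / (2^n * snd s))))\<bar>))"
  define A where "A n = fst (st n)" for n
  define B where "B n = snd (st n)" for n
  define c where "c n = 1 / (2^n * B n)" for n
  define R where "R n = (real n + A n + 3) / c n" for n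
  define gg where "gg n = G (R n)" for n
  define zz where "zz n = Zp (R n)" for n
  have A0: "A 0 = 0" and B0: "B 0 = 1" unfolding A_def B_def st_def by simp_all
  have AS: "A (Suc n) = A n + c n * M (zz n)" and BS: "B (Suc n) = B n + \<bar>QQ (gg n)\<bar>" for n
    unfolding A_def B_def st_def c_def zz_def gg_def R_def by (simp_all add: A_def B_def st_def)
  have B1: "1 \<le> B n" for n by (induction n) (auto simp: B0 BS)
  have cpos: "0 < c n" for n using B1[of n] unfolding c_def by (simp add: less_le_trans[OF zero_less_one])
  have A_nn: "0 \<le> A n" for n by (induction n) (auto simp: A0 AS intro!: add_nonneg_nonneg mult_nonneg_nonneg less_imp_le[OF cpos] M(2))
  have Asum: "A n = (\<Sum>k<n. c k * M (zz k))" for n by (induction n) (auto simp: A0 AS)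
  have Bmono: "incseq B" by (rule incseq_SucI) (simp add: BS)
  have Bbig: "\<bar>QQ (gg n)\<bar> \<le> B k" if "n < k" for n k
  proof -
    have "B (Suc n) \<le> B k" using Bmono that by (simp add: incseq_def)
    then show ?thesis using BS[of n] B1[of n] by linarith
  qed
  have cB: "c k * B k = (1/2)^k" for k
    using B1[of k] unfolding c_def by (simp add: power_one_over)
  have cgeo: "c k \<le> (1/2)^k" for k
    using cB[of k] B1[of k] cpos[of k] by (smt (verit) mult_le_cancel_left1)
  have csum: "summable c"
    by (rule summable_comparison_test[of _ "\<lambda>k. (1/2::real)^k"])
       (use cgeo cpos in \<open>auto intro!: summable_geometric exI[of _ 0] simp: abs_of_pos\<close>)
  have big: "R n < cmod (E (zz n) (gg n))" for n unfolding gg_def zz_def by (rule G(3))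
  have zzZ: "zz k \<in> Z" for k unfolding zz_def by (rule G(2))
  have ggS: "gg k \<in> S" for k unfolding gg_def by (rule G(1))
  define u where "u k = (let e = E (zz k) (gg k) in if e = 0 then 1 else cnj e / of_real (cmod e))" for k
  have u1: "cmod (u k) \<le> 1" for k unfolding u_def Let_def by (rule unit_phase(1))
  have uE: "u k * E (zz k) (gg k) = of_real (cmod (E (zz k) (gg k)))" for k
    unfolding u_def Let_def by (rule unit_phase(2))
  obtain Rb where Rb: "\<forall>g\<in>S. cmod (\<Sum>k. of_real (c k) * u k * E (zz k) g) \<le> Rb"
    using H[of c u zz] cpos less_imp_le u1 zzZ csum by blast
  obtain n :: nat where n: "Rb < real n" using reals_Archimedean2 by blast
  define t where "t k = of_real (c k) * u k * E (zz k) (gg n)" for k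
  have tb: "cmod (t k) \<le> c k * \<bar>QQ (gg n)\<bar>" for k
  proof -
    have "cmod (t k) = c k * cmod (u k) * cmod (E (zz k) (gg n))"
      unfolding t_def using cpos[of k] by (simp add: norm_mult)
    also have "\<dots> \<le> c k * 1 * \<bar>QQ (gg n)\<bar>"
      using u1[of k] QQ[OF ggS[of n] zzZ[of k]] cpos[of k]
      by (intro mult_mono mult_left_mono) auto
    finally show ?thesis by simp
  qed
  have tsum: "summable t"
    by (rule summable_norm_cancel, rule summable_comparison_test[of _ "\<lambda>k. c k * \<bar>QQ (gg n)\<bar>"])
       (use tb summable_mult2[OF csum] in auto)
  define d where "d k = t k - (if k = n then t n else 0)" for k
  have dsums: "d sums (suminf t - t n)"
    unfolding d_def by (rule sums_diff[OF summable_sums[OF tsum]]) (rule sums_single)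
  define b where "b k = (if k \<in> {..<n} then c k * M (zz k) else 0) + (1/2::real)^k" for k
  have bsums: "b sums (A n + 2)"
    unfolding b_def Asum
    by (rule sums_add[OF sums_If_finite_set]) (auto intro: geometric_sums[of "1/2::real", simplified])
  have db: "cmod (d k) \<le> b k" for k
  proof (cases "k < n")
    case True
    have "cmod (t k) = c k * cmod (u k) * cmod (E (zz k) (gg n))"
      unfolding t_def using cpos[of k] by (simp add: norm_mult)
    also have "\<dots> \<le> c k * 1 * M (zz k)"
      using u1[of k] M(1)[OF zzZ ggS, of k n] cpos[of k]
      by (intro mult_mono mult_left_mono) auto
    finally have tk: "cmod (t k) \<le> c k * M (zz k)" by simp
    have p: "(0::real) \<le> (1/2)^k" by simp
    have "cmod (d k) = cmod (t k)" "b k = c k * M (zz k) + (1/2)^k" using True unfolding d_def b_def by auto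
    then show ?thesis using tk p by linarith
  next
    case False
    show ?thesis
    proof (cases "k = n")
      case True then show ?thesis unfolding d_def b_def by simp
    next
      case False
      then have nk: "n < k" using \<open>\<not> k < n\<close> by simp
      have "cmod (t k) \<le> c k * \<bar>QQ (gg n)\<bar>" by (rule tb)
      also have "\<dots> \<le> c k * B k" using Bbig[OF nk] cpos[of k] by simp
      also have "\<dots> = (1/2)^k" by (rule cB)
      finally show ?thesis using nk unfolding d_def b_def by simp
    qed
  qed
  have dnorm: "summable (\<lambda>k. cmod (d k))"
    by (rule summable_comparison_test[of _ b]) (use db sums_summable[OF bsums] in auto)
  have "cmod (suminf t - t n) \<le> A n + 2"
  proof -
    have "cmod (suminf t - t n) = cmod (suminf d)" using sums_unique[OF dsums] by simp
    also have "\<dots> \<le> (\<Sum>k. cmod (d k))" by (rule summable_norm[OF dnorm])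
    also have "\<dots> \<le> suminf b" by (rule suminf_le) (use db dnorm sums_summable[OF bsums] in auto)
    also have "\<dots> = A n + 2" using sums_unique[OF bsums] by simp
    finally show ?thesis .
  qed
  moreover have "cmod (t n) > real n + A n + 3"
  proof -
    have "t n = of_real (c n * cmod (E (zz n) (gg n)))"
      unfolding t_def using uE[of n] by (simp add: mult.assoc)
    then have "cmod (t n) = c n * cmod (E (zz n) (gg n))" using cpos[of n]
      by (simp only: norm_of_real abs_mult) (simp add: abs_of_pos)
    moreover have "c n * R n = real n + A n + 3" unfolding R_def using cpos[of n] by simp
    moreover have "c n * R n < c n * cmod (E (zz n) (gg n))" using big[of n] cpos[of n] by simp
    ultimately show ?thesis by simp
  qed
  ultimately have "cmod (suminf t) > real n + 1"
    using norm_triangle_ineq2[of "t n" "suminf t"] norm_minus_commute[of "suminf t" "t n"] by linarith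
  moreover have "cmod (suminf t) \<le> Rb" using Rb ggS[of n] unfolding t_def by blast
  ultimately show False using n by linarith
qed



lemma X_scale:
  assumes "banach_fun_space X N" "f \<in> X"
  shows "(\<lambda>z. a * f z) \<in> X"
proof -
  have "(\<lambda>z. a * f z + 0 * f z) \<in> X" using assms unfolding banach_fun_space_def by blast
  then show ?thesis by simp
qed

lemma T_scale:
  assumes "intrinsic T" "f \<in> HD" "z \<in> ball 0 1"
  shows "T (\<lambda>w. a * f w) z = a * T f z"
proof -
  have "T (\<lambda>w. a * f w + 0 * f w) z = a * T f z + 0 * T f z"
    using assms unfolding intrinsic_def by blast
  then show ?thesis by simp
qed

lemma deriv_scale_on:
  assumes g: "g holomorphic_on ball 0 1" and h: "\<forall>w\<in>ball 0 1. h w = a * g w" and z: "z \<in> ball 0 1"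
  shows "deriv h z = a * deriv g z"
proof -
  have "(g has_field_derivative deriv g z) (at z)" using holomorphic_derivI[OF g _ z] by simp
  then have "((\<lambda>w. a * g w) has_field_derivative a * deriv g z) (at z)"
    by (auto intro!: derivative_eq_intros)
  then have "(h has_field_derivative a * deriv g z) (at z)"
    by (rule has_field_derivative_transform_within_open[of _ _ _ "ball 0 1"]) (use h z in auto)
  then show ?thesis by (rule DERIV_imp_deriv)
qed

lemma compact_in_disc_rad:
  assumes "compact K" "K \<subseteq> ball (0::complex) 1"
  obtains \<rho> where "\<rho> < 1" "0 \<le> \<rho>" "K \<subseteq> cball 0 \<rho>"
proof (cases "K = {}")
  case True then show ?thesis using that[of 0] by simp
next
  case False
  obtain x where x: "x \<in> K" "\<forall>y\<in>K. norm y \<le> norm x"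
    using continuous_attains_sup[OF assms(1) False, of norm] by (auto intro: continuous_intros)
  have "norm x < 1" using x(1) assms(2) by auto
  moreover have "K \<subseteq> cball 0 (norm x)" using x(2) by auto
  ultimately show ?thesis using that[of "norm x"] by simp
qed

lemma uc_dilate:
  assumes f: "f \<in> HD" and r: "\<And>n. 0 \<le> rr n \<and> rr n < 1" and rl: "rr \<longlonglongrightarrow> 1"
  shows "uc_conv (\<lambda>n z. f (of_real (rr n) * z)) f"
  unfolding uc_conv_def
proof (intro allI impI)
  fix K :: "complex set" assume K: "compact K \<and> K \<subseteq> ball 0 1"
  obtain \<rho> where \<rho>: "\<rho> < 1" "0 \<le> \<rho>" "K \<subseteq> cball 0 \<rho>" using compact_in_disc_rad K by metis
  have sub: "cball 0 \<rho> \<subseteq> ball (0::complex) 1" using \<rho>(1) by auto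
  have "f holomorphic_on ball 0 1" using f unfolding HD_def by simp
  then have "continuous_on (cball 0 \<rho>) f"
    using holomorphic_on_imp_continuous_on holomorphic_on_subset sub by blast
  then have uc: "uniformly_continuous_on (cball 0 \<rho>) f"
    by (rule compact_uniformly_continuous) simp
  show "uniform_limit K (\<lambda>n z. f (of_real (rr n) * z)) f sequentially"
    unfolding uniform_limit_sequentially_iff
  proof (intro allI impI)
    fix e :: real assume e: "e > 0"
    obtain d where d: "d > 0" "\<And>x y. x \<in> cball 0 \<rho> \<Longrightarrow> y \<in> cball 0 \<rho> \<Longrightarrow> dist y x < d \<Longrightarrow> dist (f y) (f x) < e"
      using uc e unfolding uniformly_continuous_on_def by metis
    obtain N where N: "\<And>n. n \<ge> N \<Longrightarrow> dist (rr n) 1 < d" using rl d(1) unfolding lim_sequentially by metis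
    show "\<exists>N. \<forall>n\<ge>N. \<forall>x\<in>K. dist (f (of_real (rr n) * x)) (f x) < e"
    proof (intro exI allI impI ballI)
      fix n x assume n: "N \<le> n" and x: "x \<in> K"
      have xr: "x \<in> cball 0 \<rho>" using x \<rho> by auto
      then have nx: "norm x \<le> 1" using \<rho> by simp
      have "norm (of_real (rr n) * x) \<le> norm x" using r[of n] by (simp add: norm_mult mult_left_le_one_le)
      then have yr: "of_real (rr n) * x \<in> cball 0 \<rho>" using xr by simp
      have "x - of_real (rr n) * x = of_real (1 - rr n) * x" by (simp add: algebra_simps)
      then have "dist (of_real (rr n) * x) x = \<bar>1 - rr n\<bar> * norm x"
        by (simp only: dist_norm norm_minus_commute[of "of_real (rr n) * x" x] norm_mult norm_of_real)
      also have "\<dots> \<le> \<bar>1 - rr n\<bar>" using nx by (intro mult_right_le_one_le) auto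
      also have "\<dots> < d" using N[OF n] by (simp add: dist_real_def abs_minus_commute)
      finally show "dist (f (of_real (rr n) * x)) (f x) < e" using d(2)[OF xr yr] by simp
    qed
  qed
qed

lemma uc_T_lim:
  assumes T: "intrinsic T" and F: "\<And>n. F n \<in> HD" and g: "g \<in> HD" and c: "uc_conv F g"
  shows "uc_conv (\<lambda>n. T (F n)) (T g)"
proof -
  define F' where "F' n = (if even n then F (n div 2) else g)" for n
  have F'HD: "\<forall>n. F' n \<in> HD" using F g unfolding F'_def by auto
  have "uc_conv F' g"
    unfolding uc_conv_def
  proof (intro allI impI)
    fix K :: "complex set" assume K: "compact K \<and> K \<subseteq> ball 0 1"
    have u: "uniform_limit K F g sequentially" using c K unfolding uc_conv_def by blast
    show "uniform_limit K F' g sequentially"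
      unfolding uniform_limit_sequentially_iff
    proof (intro allI impI)
      fix e :: real assume e: "e > 0"
      obtain N where N: "\<And>n x. n \<ge> N \<Longrightarrow> x \<in> K \<Longrightarrow> dist (F n x) (g x) < e"
        using u e unfolding uniform_limit_sequentially_iff by metis
      show "\<exists>N. \<forall>n\<ge>N. \<forall>x\<in>K. dist (F' n x) (g x) < e"
      proof (intro exI allI impI ballI)
        fix n x assume "2 * N \<le> n" "x \<in> K"
        then show "dist (F' n x) (g x) < e" using N[of "n div 2" x] e unfolding F'_def by auto
      qed
    qed
  qed
  then obtain h where h: "h \<in> HD" "uc_conv (\<lambda>n. T (F' n)) h"
    using T F'HD g unfolding intrinsic_def by blast
  show ?thesis
    unfolding uc_conv_def
  proof (intro allI impI)
    fix K :: "complex set" assume K: "compact K \<and> K \<subseteq> ball 0 1"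
    have u: "uniform_limit K (\<lambda>n. T (F' n)) h sequentially" using h(2) K unfolding uc_conv_def by blast
    have fe: "filterlim (\<lambda>n::nat. 2 * n) sequentially sequentially"
      by (rule filterlim_subseq) (simp add: strict_mono_def)
    have fo: "filterlim (\<lambda>n::nat. 2 * n + 1) sequentially sequentially"
      by (rule filterlim_subseq) (simp add: strict_mono_def)
    have ue: "uniform_limit K (\<lambda>n. T (F' (2 * n))) h sequentially"
      using filterlim_compose[OF u fe] by (simp add: o_def)
    have uo: "uniform_limit K (\<lambda>n. T (F' (2 * n + 1))) h sequentially"
      using filterlim_compose[OF u fo] by (simp add: o_def)
    have "h x = T g x" if x: "x \<in> K" for x
    proof -
      have "((\<lambda>n. T (F' (2 * n + 1)) x) \<longlongrightarrow> h x) sequentially" by (rule tendsto_uniform_limitI[OF uo x])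
      then have "((\<lambda>n. T g x) \<longlongrightarrow> h x) sequentially" unfolding F'_def by simp
      then show ?thesis using LIMSEQ_const_iff by metis
    qed
    moreover have "(\<lambda>n. T (F' (2 * n))) = (\<lambda>n. T (F n))" unfolding F'_def by simp
    moreover have "uniform_limit K (\<lambda>n. T (F n)) h sequentially = uniform_limit K (\<lambda>n. T (F n)) (T g) sequentially"
      by (rule uniform_limit_cong) (use calculation(1) in auto)
    ultimately show "uniform_limit K (\<lambda>n. T (F n)) (T g) sequentially"
      using ue by simp
  qed
qed

lemma uc_deriv:
  assumes G: "\<And>n. G n \<in> HD" and h: "h \<in> HD" and c: "uc_conv G h" and z: "z \<in> ball 0 1"
  shows "(\<lambda>n. deriv (G n) z) \<longlonglongrightarrow> deriv h z"
proof -
  define r where "r = (1 - norm z) / 2"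
  have r: "0 < r" using z unfolding r_def by simp
  have sub: "cball z r \<subseteq> ball 0 1"
  proof
    fix w assume "w \<in> cball z r"
    then have "norm (w - z) \<le> r" by (simp add: dist_norm norm_minus_commute)
    then have "norm w \<le> norm z + r" using norm_triangle_ineq2[of w z] by linarith
    moreover have "norm z < 1" using z by simp
    moreover have "norm z + r < 1" unfolding r_def using \<open>norm z < 1\<close> by (simp add: field_simps)
    ultimately have "norm w < 1" by linarith
    then show "w \<in> ball 0 1" by simp
  qed
  have u: "uniform_limit (cball z r) G h sequentially" using c sub unfolding uc_conv_def by simp
  have ev: "\<forall>\<^sub>F n in sequentially. continuous_on (cball z r) (G n) \<and>
      (\<forall>w \<in> ball z r. (G n has_field_derivative deriv (G n) w) (at w))"
  proof (rule always_eventually, intro allI conjI ballI)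
    fix n
    have hol: "G n holomorphic_on ball 0 1" using G unfolding HD_def by simp
    show "continuous_on (cball z r) (G n)"
      using holomorphic_on_imp_continuous_on[OF holomorphic_on_subset[OF hol sub]] .
    fix w assume "w \<in> ball z r"
    then have "w \<in> ball 0 1" using sub ball_subset_cball[of z r] by blast
    then show "(G n has_field_derivative deriv (G n) w) (at w)" using holomorphic_derivI[OF hol] by simp
  qed
  obtain g' where g': "\<And>w. w \<in> ball z r \<Longrightarrow> (h has_field_derivative (g' w)) (at w) \<and> ((\<lambda>n. deriv (G n) w) \<longlongrightarrow> g' w) sequentially"
    using has_complex_derivative_uniform_limit[OF ev u trivial_limit_sequentially r] by metis
  have zb: "z \<in> ball z r" using r by simp
  have "deriv h z = g' z" using g'[OF zb] DERIV_imp_deriv by blast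
  then show ?thesis using g'[OF zb] by simp
qed



theorem theorem3p3:
  fixes v :: "complex \<Rightarrow> real" and X :: "hfun set" and N :: "hfun \<Rightarrow> real"
    and T :: "hfun \<Rightarrow> hfun"
  assumes "typical_weight v"
    and "initial_space X N"
    and "\<forall>f\<in>X. \<forall>r::real. 0 \<le> r \<and> r < 1 \<longrightarrow> (\<lambda>z. f (of_real r * z)) \<in> X"
    and "\<exists>C. \<forall>f\<in>X. \<forall>r::real. 0 \<le> r \<and> r < 1 \<longrightarrow> N (\<lambda>z. f (of_real r * z)) \<le> C * N f"
    and "intrinsic T"
    and "\<forall>f\<in>X. \<forall>r::real. 0 \<le> r \<and> r < 1 \<longrightarrow> T (\<lambda>z. f (of_real r * z)) \<in> Bv0 v"
    and "weakly_compact_op T X N v"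
  shows "T ` X \<subseteq> Bv0 v \<and> (\<exists>C. \<forall>f\<in>X. Bv_norm v (T f) \<le> C * N f)"
proof -
  note tw = assms(1)
  have ban: "banach_fun_space X N" using assms(2) unfolding initial_space_def by simp
  have XHD: "\<And>f. f \<in> X \<Longrightarrow> f \<in> HD" using ban unfolding banach_fun_space_def by blast
  have Nnn: "\<And>f. f \<in> X \<Longrightarrow> 0 \<le> N f" using ban unfolding banach_fun_space_def by blast
  have Nsc: "\<And>f a. f \<in> X \<Longrightarrow> N (\<lambda>z. a * f z) = cmod a * N f" using ban unfolding banach_fun_space_def by blast
  have TB: "T ` X \<subseteq> Bv v" using assms(7) unfolding weakly_compact_op_def by simp
  define S where "S = T ` {f\<in>X. N f \<le> 1}"
  have Kc: "compactin (weak_top v) ((weak_top v) closure_of S)"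
    using assms(7) unfolding weakly_compact_op_def S_def by simp
  have SB: "S \<subseteq> Bv v" using TB unfolding S_def by blast
  have THD: "\<And>f. f \<in> HD \<Longrightarrow> T f \<in> HD" using assms(5) unfolding intrinsic_def by blast
  have BvHD: "\<And>g. g \<in> Bv v \<Longrightarrow> g \<in> HD" unfolding Bv_def by simp
  obtain C0 where C0: "\<And>f r. f \<in> X \<Longrightarrow> 0 \<le> r \<Longrightarrow> r < 1 \<Longrightarrow> N (\<lambda>z. f (of_real r * z)) \<le> C0 * N f"
    using assms(4) by blast
  define C1 where "C1 = max C0 1"
  have C1: "C0 \<le> C1" "1 \<le> C1" unfolding C1_def by auto
  have bnd: "\<exists>R. \<forall>g\<in>S. cmod (\<phi> g) \<le> R" if \<phi>: "\<phi> \<in> Bv_dual v" for \<phi>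
  proof -
    have "compactin euclidean (\<phi> ` ((weak_top v) closure_of S))"
      by (rule image_compactin[OF Kc dual_cont[OF \<phi>]])
    then have "bounded (\<phi> ` ((weak_top v) closure_of S))" by (simp add: compact_imp_bounded)
    then obtain R where R: "\<forall>x\<in>\<phi> ` ((weak_top v) closure_of S). norm x \<le> R" unfolding bounded_iff by blast
    have "S \<subseteq> (weak_top v) closure_of S" by (rule closure_of_subset) (simp add: topspace_weak SB)
    then show ?thesis using R by blast
  qed
  have P1: "T f \<in> Bv0 v" if f: "f \<in> X" for f
  proof -
    define s where "s = N f"
    have s: "0 \<le> s" unfolding s_def using Nnn[OF f] .
    define lam where "lam = 1 / (C1 * (s + 1))"
    have lam: "0 < lam" unfolding lam_def using C1 s by simp
    define ft where "ft = (\<lambda>z. of_real lam * f z)"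
    have ftX: "ft \<in> X" unfolding ft_def by (rule X_scale[OF ban f])
    have ftHD: "ft \<in> HD" using XHD[OF ftX] .
    have Nft: "N ft = lam * s" unfolding ft_def s_def using Nsc[OF f] lam by simp
    have ftr: "(\<lambda>z. ft (of_real r * z)) \<in> X \<and> N (\<lambda>z. ft (of_real r * z)) \<le> 1" if r: "0 \<le> r" "r < 1" for r
    proof
      show "(\<lambda>z. ft (of_real r * z)) \<in> X" using assms(3) ftX r by blast
      have "N (\<lambda>z. ft (of_real r * z)) \<le> C0 * N ft" using C0[OF ftX r] .
      also have "\<dots> \<le> C1 * N ft" using C1 Nnn[OF ftX] by (intro mult_right_mono) auto
      also have "\<dots> = s / (s + 1)"
      proof -
        have "C1 * lam = 1 / (s + 1)" unfolding lam_def using C1 s by simp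
        then show ?thesis unfolding Nft by (metis mult.assoc times_divide_eq_left mult_1)
      qed
      also have "\<dots> \<le> 1" using s by simp
      finally show "N (\<lambda>z. ft (of_real r * z)) \<le> 1" .
    qed
    define rr where "rr n = 1 + - inverse (real (Suc n))" for n
    have rr: "0 \<le> rr n \<and> rr n < 1" for n
      unfolding rr_def by (simp add: inverse_le_1_iff)
    have rrl: "rr \<longlonglongrightarrow> 1" unfolding rr_def by (rule LIMSEQ_inverse_real_of_nat_add_minus)
    define G where "G n = (\<lambda>z. ft (of_real (rr n) * z))" for n
    define g where "g n = T (G n)" for n
    have GX: "G n \<in> X" "N (G n) \<le> 1" for n unfolding G_def using ftr rr by auto
    have gS: "\<forall>n. g n \<in> S" unfolding g_def S_def using GX by blast
    have gB0: "g n \<in> Bv0 v" for n unfolding g_def G_def using assms(6) ftX rr by blast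
    have gHD: "g n \<in> HD" for n unfolding g_def using THD XHD GX by blast
    have ucG: "uc_conv G ft" unfolding G_def by (rule uc_dilate[OF ftHD rr rrl])
    have ucg: "uc_conv g (T ft)" unfolding g_def by (rule uc_T_lim[OF assms(5) _ ftHD ucG]) (use XHD GX in blast)
    have TftHD: "T ft \<in> HD" by (rule THD[OF ftHD])
    have TftB: "T ft \<in> Bv v" using TB ftX by blast
    have dconv: "(\<lambda>n. deriv (g n) z) \<longlonglongrightarrow> deriv (T ft) z" if "z \<in> ball 0 1" for z
      by (rule uc_deriv[OF gHD TftHD ucg that])
    obtain p where p: "p \<in> Bv v" "\<forall>\<phi>\<in>Bv_dual v. \<forall>L. (\<lambda>n. \<phi> (g n)) \<longlonglongrightarrow> L \<longrightarrow> \<phi> p = L"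
      using weak_cluster[OF Kc SB gS] by blast
    have pd: "deriv p z = deriv (T ft) z" if z: "z \<in> ball 0 1" for z
    proof -
      have "(\<lambda>n. of_real (v z) * deriv (g n) z) \<longlonglongrightarrow> of_real (v z) * deriv (T ft) z"
        by (rule tendsto_mult_left[OF dconv[OF z]])
      then have "of_real (v z) * deriv p z = of_real (v z) * deriv (T ft) z"
        by (rule p(2)[rule_format, OF dual_deriv[OF tw z]])
      then show ?thesis using tw_pos[OF tw z] by simp
    qed
    have TftB0: "T ft \<in> Bv0 v"
    proof (rule ccontr)
      assume "T ft \<notin> Bv0 v"
      then have "\<exists>e>0. \<forall>\<delta><1. \<exists>z. \<delta> < norm z \<and> norm z < 1 \<and> e \<le> v z * cmod (deriv (T ft) z)"
        using TftHD unfolding Bv0_def by (auto simp: not_less) (meson not_le)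
      then obtain e where e: "e > 0" "\<And>\<delta>. \<delta> < 1 \<Longrightarrow> \<exists>z. \<delta> < norm z \<and> norm z < 1 \<and> e \<le> v z * cmod (deriv (T ft) z)"
        by blast
      have "\<forall>k. \<exists>z. 1 + - inverse (real (Suc k)) < norm z \<and> norm z < 1 \<and> e \<le> v z * cmod (deriv (T ft) z)"
        using e(2) by simp
      then obtain zs where zs: "\<And>k. 1 + - inverse (real (Suc k)) < norm (zs k) \<and> norm (zs k) < 1 \<and> e \<le> v (zs k) * cmod (deriv (T ft) (zs k))"
        by metis
      have zsD: "zs k \<in> ball 0 1" for k using zs[of k] by simp
      define d where "d k = deriv (T ft) (zs k)" for k
      define w where "w k = (if d k = 0 then 1 else cnj (d k) / of_real (cmod (d k)))" for k
      have w1: "cmod (w k) \<le> 1" for k unfolding w_def by (rule unit_phase(1))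
      have wd: "w k * d k = of_real (cmod (d k))" for k unfolding w_def by (rule unit_phase(2))
      obtain U :: "nat filter" where U: "U \<le> sequentially" "ultra U" using ultra_seq by blast
      have nb: "U \<noteq> bot" using U(2) unfolding ultra_def by simp
      define \<psi> where "\<psi> = (\<lambda>h. Lim U (\<lambda>k. w k * (of_real (v (zs k)) * deriv h (zs k))))"
      have \<psi>D: "\<psi> \<in> Bv_dual v" unfolding \<psi>_def
        by (rule dual_lim[OF tw U(2)]) (use zsD w1 in auto)
      have \<psi>g: "\<psi> (g n) = 0" for n
      proof -
        have lim0: "(\<lambda>k. w k * (of_real (v (zs k)) * deriv (g n) (zs k))) \<longlonglongrightarrow> 0"
          unfolding lim_sequentially
        proof (intro allI impI)
          fix \<epsilon> :: real assume \<epsilon>: "\<epsilon> > 0"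
          obtain \<delta> where \<delta>: "\<delta> < 1" "\<And>z. \<delta> < norm z \<and> norm z < 1 \<Longrightarrow> v z * cmod (deriv (g n) z) < \<epsilon>"
            using gB0[of n] \<epsilon> unfolding Bv0_def by blast
          obtain k0 :: nat where k0: "1 / (1 - \<delta>) < real k0" using reals_Archimedean2 by blast
          show "\<exists>no. \<forall>k\<ge>no. dist (w k * (of_real (v (zs k)) * deriv (g n) (zs k))) 0 < \<epsilon>"
          proof (intro exI allI impI)
            fix k assume k: "k0 \<le> k"
            have pos: "0 < 1 - \<delta>" using \<delta>(1) by simp
            have "1 / (1 - \<delta>) < real (Suc k)" using k0 k by simp
            then have "inverse (real (Suc k)) < 1 - \<delta>" using pos
              by (simp add: field_simps inverse_eq_divide)
            then have "\<delta> < norm (zs k)" using zs[of k] by linarith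
            then have lt: "v (zs k) * cmod (deriv (g n) (zs k)) < \<epsilon>" using \<delta>(2) zs[of k] by blast
            have "cmod (w k * (of_real (v (zs k)) * deriv (g n) (zs k))) = cmod (w k) * (v (zs k) * cmod (deriv (g n) (zs k)))"
              using tw_pos[OF tw zsD[of k]] by (simp add: norm_mult)
            also have "\<dots> \<le> 1 * (v (zs k) * cmod (deriv (g n) (zs k)))"
              using w1[of k] tw_pos[OF tw zsD[of k]] by (intro mult_right_mono) auto
            finally show "dist (w k * (of_real (v (zs k)) * deriv (g n) (zs k))) 0 < \<epsilon>" using lt by simp
          qed
        qed
        have "((\<lambda>k. w k * (of_real (v (zs k)) * deriv (g n) (zs k))) \<longlongrightarrow> 0) U"
          by (rule tendsto_mono[OF U(1) lim0])
        then show ?thesis unfolding \<psi>_def by (rule tendsto_Lim[OF nb])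
      qed
      have \<psi>p: "\<psi> p = 0" using p(2) \<psi>D \<psi>g by simp
      have "\<psi> p = \<psi> (T ft)" unfolding \<psi>_def using pd zsD by simp
      moreover have "\<psi> (T ft) \<noteq> 0"
      proof -
        define x where "x k = w k * (of_real (v (zs k)) * deriv (T ft) (zs k))" for k
        have xk: "x k = of_real (v (zs k) * cmod (d k))" for k
          unfolding x_def using wd[of k] unfolding d_def by (simp add: algebra_simps)
        have xb: "cmod (x k) \<le> Bv_norm v (T ft)" for k
        proof -
          have "cmod (x k) = \<bar>v (zs k) * cmod (d k)\<bar>" unfolding xk by (rule norm_of_real)
          also have "\<dots> = v (zs k) * cmod (d k)" using tw_pos[OF tw zsD[of k]] by simp
          finally show ?thesis using bv_pt[OF TftB zsD[of k]] unfolding d_def by simp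
        qed
        have xl: "(x \<longlongrightarrow> Lim U x) U" by (rule ultra_lim[OF U(2)]) (use xb in blast)
        have "e \<le> Re (Lim U x)"
          by (rule tendsto_lowerbound[OF tendsto_Re[OF xl] _ nb]) (use zs in \<open>simp add: xk d_def\<close>)
        then have "Lim U x \<noteq> 0" using e(1) by auto
        then show ?thesis unfolding \<psi>_def x_def by simp
      qed
      ultimately show False using \<psi>p by simp
    qed
    have fe: "f = (\<lambda>z. of_real (1 / lam) * ft z)" unfolding ft_def using lam by (auto simp: field_simps)
    have TfHD: "T f \<in> HD" using THD XHD f by blast
    have Tf: "\<forall>z\<in>ball 0 1. T f z = of_real (1 / lam) * T ft z"
      using T_scale[OF assms(5) ftHD] fe by metis
    have dTf: "deriv (T f) z = of_real (1 / lam) * deriv (T ft) z" if "z \<in> ball 0 1" for z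
      by (rule deriv_scale_on[OF _ Tf that]) (use TftHD in \<open>simp add: HD_def\<close>)
    show "T f \<in> Bv0 v"
      unfolding Bv0_def
    proof (intro CollectI conjI allI impI TfHD)
      fix \<epsilon> :: real assume \<epsilon>: "\<epsilon> > 0"
      obtain \<delta> where \<delta>: "\<delta> < 1" "\<And>z. \<delta> < norm z \<and> norm z < 1 \<Longrightarrow> v z * cmod (deriv (T ft) z) < \<epsilon> * lam"
      proof -
        have el: "\<epsilon> * lam > 0" using \<epsilon> lam by simp
        have "\<forall>e>0. \<exists>\<delta><1. \<forall>z. \<delta> < cmod z \<and> cmod z < 1 \<longrightarrow> v z * cmod (deriv (T ft) z) < e"
          using TftB0 unfolding Bv0_def by blast
        then show ?thesis using el that by blast
      qed
      show "\<exists>\<delta><1. \<forall>z. \<delta> < cmod z \<and> cmod z < 1 \<longrightarrow> v z * cmod (deriv (T f) z) < \<epsilon>"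
      proof (intro exI conjI allI impI)
        fix z assume z: "\<delta> < cmod z \<and> cmod z < 1"
        then have zD: "z \<in> ball 0 1" by simp
        have "v z * cmod (deriv (T f) z) = (v z * cmod (deriv (T ft) z)) / lam"
          using dTf[OF zD] lam by (simp add: norm_mult norm_divide)
        also have "\<dots> < (\<epsilon> * lam) / lam" using \<delta>(2)[OF z] lam by (intro divide_strict_right_mono) auto
        finally show "v z * cmod (deriv (T f) z) < \<epsilon>" using lam by simp
      qed (rule \<delta>(1))
    qed
  qed
  obtain R1 where R1: "\<forall>g\<in>S. \<forall>z\<in>ball 0 1. cmod (of_real (v z) * deriv g z) \<le> R1"
  proof -
    have "\<exists>R. \<forall>g\<in>S. \<forall>z\<in>ball 0 1. cmod ((\<lambda>z g. of_real (v z) * deriv g z) z g) \<le> R"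
    proof (rule hump)
      show "\<forall>g\<in>S. \<exists>q. \<forall>z\<in>ball 0 1. cmod ((\<lambda>z g. of_real (v z) * deriv g z) z g) \<le> q"
      proof
        fix g assume g: "g \<in> S"
        show "\<exists>q. \<forall>z\<in>ball 0 1. cmod ((\<lambda>z g. of_real (v z) * deriv g z) z g) \<le> q"
        proof (intro exI ballI)
          fix z :: complex assume z: "z \<in> ball 0 1"
          show "cmod ((\<lambda>z g. of_real (v z) * deriv g z) z g) \<le> Bv_norm v g"
            using bv_pt[of g v z] g SB z tw_pos[OF tw z] by (auto simp: norm_mult)
        qed
      qed
    next
      fix c :: "nat \<Rightarrow> real" and u :: "nat \<Rightarrow> complex" and zs :: "nat \<Rightarrow> complex"
      assume c: "\<And>k. 0 \<le> c k" and u: "\<And>k. cmod (u k) \<le> 1" and zs: "\<And>k. zs k \<in> ball 0 1" and cs: "summable c"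
      have "(\<lambda>g. \<Sum>k. (of_real (c k) * u k) * (of_real (v (zs k)) * deriv g (zs k))) \<in> Bv_dual v"
      proof (rule dual_series[OF tw _ cs], intro allI conjI)
        fix k
        show "zs k \<in> ball 0 1" by (rule zs)
        show "cmod (of_real (c k) * u k) \<le> c k"
          using c[of k] u[of k] by (simp add: norm_mult mult_left_le)
      qed
      then show "\<exists>R. \<forall>g\<in>S. cmod (\<Sum>k. of_real (c k) * u k * (\<lambda>z g. of_real (v z) * deriv g z) (zs k) g) \<le> R"
        using bnd by simp
    qed
    then show ?thesis using that by blast
  qed
  obtain R0 where R0: "\<forall>g\<in>S. cmod (g 0) \<le> R0" using bnd[OF dual_ev0[OF tw]] by blast
  define RR where "RR = max 0 R0 + max 0 R1"
  have RR0: "0 \<le> RR" unfolding RR_def by simp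
  have key: "t * Bv_norm v (T f) \<le> RR" if f: "f \<in> X" and t: "0 < t" "t * N f \<le> 1" for f t
  proof -
    define ft where "ft = (\<lambda>z. of_real t * f z)"
    have ftX: "ft \<in> X" unfolding ft_def by (rule X_scale[OF ban f])
    have "N ft = t * N f" unfolding ft_def using Nsc[OF f] t by simp
    then have TS: "T ft \<in> S" unfolding S_def using ftX t by auto
    have fHD: "f \<in> HD" by (rule XHD[OF f])
    have Tft: "\<forall>z\<in>ball 0 1. T ft z = of_real t * T f z" unfolding ft_def using T_scale[OF assms(5) fHD] by blast
    have TfHD: "T f \<in> HD" by (rule THD[OF fHD])
    have b0: "t * cmod (T f 0) \<le> max 0 R0"
    proof -
      have "cmod (T ft 0) = t * cmod (T f 0)" using Tft t by (simp add: norm_mult)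
      then show ?thesis using R0 TS by force
    qed
    have b1: "v z * cmod (deriv (T f) z) \<le> max 0 R1 / t" if z: "z \<in> ball 0 1" for z
    proof -
      have "deriv (T ft) z = of_real t * deriv (T f) z"
        by (rule deriv_scale_on[OF _ Tft z]) (use TfHD in \<open>simp add: HD_def\<close>)
      then have "cmod (of_real (v z) * deriv (T ft) z) = t * (v z * cmod (deriv (T f) z))"
        using t tw_pos[OF tw z] by (simp add: norm_mult)
      then have "t * (v z * cmod (deriv (T f) z)) \<le> max 0 R1" using R1 TS z by force
      then show ?thesis using t by (simp add: field_simps)
    qed
    have "(SUP z\<in>ball 0 1. v z * cmod (deriv (T f) z)) \<le> max 0 R1 / t"
      by (rule cSUP_least) (use b1 in auto)
    then have "t * (SUP z\<in>ball 0 1. v z * cmod (deriv (T f) z)) \<le> max 0 R1"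
      using t by (simp add: field_simps)
    then show ?thesis using b0 unfolding Bv_norm_def RR_def by (simp add: distrib_left)
  qed
  have P2: "Bv_norm v (T f) \<le> RR * N f" if f: "f \<in> X" for f
  proof (cases "N f = 0")
    case False
    then have Np: "0 < N f" using Nnn[OF f] by simp
    have "(1 / N f) * Bv_norm v (T f) \<le> RR" by (rule key[OF f]) (use Np in auto)
    then show ?thesis using Np by (simp add: field_simps)
  next
    case True
    show ?thesis
    proof (rule ccontr)
      assume "\<not> ?thesis"
      then have bp: "0 < Bv_norm v (T f)" using True by simp
      have "((RR + 1) / Bv_norm v (T f)) * Bv_norm v (T f) \<le> RR"
        by (rule key[OF f]) (use bp RR0 True in auto)
      then show False using bp by simp
    qed
  qed
  show ?thesis using P1 P2 by blast
qed


end
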